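(* There exists a decreasing sequence of elements of $\mathcal{D}_0$ with limit $\sqrt3$.
   Context: For an infinite word $w$ (over any alphabet) with infinitely many palindromic prefixes (the empty word counting as one), let $(n_i)_{i\ge1}$ be the increasing sequence of their lengths and $\delta(w)=\limsup n_{i+1}/n_i$. $w$ has abundant palindromic prefixes if it has infinitely many palindromic prefixes and $n_{i+1}\le2n_i+1$ for all $i\ge1$. $\mathcal{D}_0$ is the set of values $\delta(w)$ over all words $w$ with abundant palindromic prefixes. *)

theory Defs
  imports "HOL-Analysis.Analysis" "HOL-Library.Infinite_Set"
begin

definition pal_prefix :: "(nat \<Rightarrow> 'a) \<Rightarrow> nat \<Rightarrow> bool" where
  "pal_prefix w n \<longleftrightarrow> (\<forall>i<n. w i = w (n - 1 - i))"

definition pal_lengths :: "(nat \<Rightarrow> 'a) \<Rightarrow> nat set" where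
  "pal_lengths w = {n. pal_prefix w n}"

text \<open>Increasing enumeration (n_i): the paper's n_(i+1) is plen w i (0-based).\<close>
definition plen :: "(nat \<Rightarrow> 'a) \<Rightarrow> nat \<Rightarrow> nat" where
  "plen w i = enumerate (pal_lengths w) i"

definition delta :: "(nat \<Rightarrow> 'a) \<Rightarrow> ereal" where
  "delta w = limsup (\<lambda>i. ereal (real (plen w (Suc i)) / real (plen w i)))"

definition abundant :: "(nat \<Rightarrow> 'a) \<Rightarrow> bool" where
  "abundant w \<longleftrightarrow> infinite (pal_lengths w) \<and>
     (\<forall>i. plen w (Suc i) \<le> 2 * plen w i + 1)"

text \<open>Alphabet: nat (every word over any alphabet has countably many letters and
  can be injectively relabelled over nat without changing its palindromic prefixes).\<close>
definition D0 :: "ereal set" where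
  "D0 = {delta w | w :: nat \<Rightarrow> nat. abundant w}"

end

theory Submission
  imports Defs
begin

definition fresh :: "(nat \<Rightarrow> nat) \<Rightarrow> nat \<Rightarrow> bool" where
  "fresh \<delta> i \<longleftrightarrow> \<delta> i = 0 \<or> i < \<delta> i"

fun nn :: "(nat \<Rightarrow> nat) \<Rightarrow> nat \<Rightarrow> nat" where
  "nn \<delta> 0 = 0"
| "nn \<delta> (Suc i) = (if fresh \<delta> i then 2 * nn \<delta> i + 1 else 2 * nn \<delta> i - nn \<delta> (i - \<delta> i))"

lemmas nn_Suc = nn.simps(2)
declare nn.simps(2)[simp del]

lemma mono_upto:
  fixes f :: "nat \<Rightarrow> nat"
  assumes "\<And>t. t < i \<Longrightarrow> f t < f (Suc t)" "j < i"
  shows "f j < f i"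
  using assms
proof (induction i)
  case 0 then show ?case by simp
next
  case (Suc i)
  have fi: "f i < f (Suc i)" using Suc.prems(1) by simp
  show ?case
  proof (cases "j = i")
    case True then show ?thesis using fi by simp
  next
    case False
    with Suc.prems(2) have "j < i" by simp
    with Suc.IH Suc.prems(1) have "f j < f i" by simp
    with fi show ?thesis by simp
  qed
qed

lemma nn_step: "nn \<delta> i < nn \<delta> (Suc i)"
proof (induction i rule: less_induct)
  case (less i)
  show ?case
  proof (cases "fresh \<delta> i")
    case True then show ?thesis by (simp add: nn_Suc)
  next
    case False
    then have d: "0 < \<delta> i" "\<delta> i \<le> i" by (auto simp: fresh_def)
    have "nn \<delta> (i - \<delta> i) < nn \<delta> i"
      using d less.IH by (intro mono_upto[of i "nn \<delta>"]) auto
    then show ?thesis using False by (simp add: nn_Suc)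
  qed
qed

lemma nn_strict_mono: "strict_mono (nn \<delta>)"
  unfolding strict_mono_Suc_iff using nn_step by blast

lemma nn_less_iff[simp]: "nn \<delta> i < nn \<delta> j \<longleftrightarrow> i < j"
  using nn_strict_mono strict_mono_less by blast

lemma nn_le_iff[simp]: "nn \<delta> i \<le> nn \<delta> j \<longleftrightarrow> i \<le> j"
  using nn_strict_mono strict_mono_less_eq by blast

lemma nn_ge: "i \<le> nn \<delta> i"
proof (induction i)
  case (Suc i)
  then show ?case using nn_step[of \<delta> i] by linarith
qed simp

definition per :: "(nat \<Rightarrow> nat) \<Rightarrow> nat \<Rightarrow> nat" where
  "per \<delta> i = nn \<delta> (Suc i) - nn \<delta> i"

lemma per_pos: "0 < per \<delta> i"
  using nn_step[of \<delta> i] by (simp add: per_def del: nn.simps)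

definition idx :: "(nat \<Rightarrow> nat) \<Rightarrow> nat \<Rightarrow> nat" where
  "idx \<delta> p = (LEAST i. p < nn \<delta> (Suc i))"

lemma idx_eq: assumes "nn \<delta> i \<le> p" "p < nn \<delta> (Suc i)" shows "idx \<delta> p = i"
  unfolding idx_def
proof (rule Least_equality)
  show "p < nn \<delta> (Suc i)" by fact
  fix y assume "p < nn \<delta> (Suc y)"
  then have "nn \<delta> i < nn \<delta> (Suc y)" using assms(1) by linarith
  then have "i < Suc y" by simp
  then show "i \<le> y" by simp
qed

lemma idx_bounds: "nn \<delta> (idx \<delta> p) \<le> p \<and> p < nn \<delta> (Suc (idx \<delta> p))"
proof -
  have ex: "\<exists>i. p < nn \<delta> (Suc i)"
    using nn_ge[of "Suc p" \<delta>] by (intro exI[of _ p]) simp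
  have a: "p < nn \<delta> (Suc (idx \<delta> p))"
    unfolding idx_def using LeastI_ex[OF ex] .
  have b: "nn \<delta> (idx \<delta> p) \<le> p"
  proof (cases "idx \<delta> p")
    case 0 then show ?thesis by simp
  next
    case (Suc j)
    have "j < (LEAST i. p < nn \<delta> (Suc i))" using Suc unfolding idx_def by simp
    then have "\<not> p < nn \<delta> (Suc j)" by (rule not_less_Least)
    then show ?thesis using Suc by simp
  qed
  show ?thesis using a b by blast
qed

function wd :: "(nat \<Rightarrow> nat) \<Rightarrow> nat \<Rightarrow> nat" where
  "wd \<delta> p = (if p < per \<delta> (idx \<delta> p) then p else wd \<delta> (p - per \<delta> (idx \<delta> p)))"
  by pat_completeness auto
termination
proof (relation "Wellfounded.measure (\<lambda>(\<delta>, p). p)")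
  fix \<delta> p assume a: "\<not> p < per \<delta> (idx \<delta> p)"
  have "0 < per \<delta> (idx \<delta> p)" by (rule per_pos)
  with a show "((\<delta>, p - per \<delta> (idx \<delta> p)), \<delta>, p) \<in> Wellfounded.measure (\<lambda>(\<delta>, p). p)"
    by simp
qed simp

declare wd.simps[simp del]

lemma wd_le: "wd \<delta> p \<le> p"
proof (induction p rule: less_induct)
  case (less p)
  show ?case
  proof (cases "p < per \<delta> (idx \<delta> p)")
    case True then show ?thesis by (subst wd.simps) simp
  next
    case False
    have "p - per \<delta> (idx \<delta> p) < p" using False per_pos[of \<delta> "idx \<delta> p"] by linarith
    from less.IH[OF this] False show ?thesis by (subst wd.simps) simp
  qed
qed

lemma wd_per:
  assumes "nn \<delta> i \<le> p" "p < nn \<delta> (Suc i)" "per \<delta> i \<le> p"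
  shows "wd \<delta> p = wd \<delta> (p - per \<delta> i)"
  using assms idx_eq[OF assms(1,2)] by (subst wd.simps) simp

lemma per_fresh: "fresh \<delta> i \<Longrightarrow> per \<delta> i = nn \<delta> i + 1"
  by (simp add: per_def nn_Suc)

lemma per_nonfresh: "\<not> fresh \<delta> i \<Longrightarrow> per \<delta> i = nn \<delta> i - nn \<delta> (i - \<delta> i)"
proof -
  assume a: "\<not> fresh \<delta> i"
  have "nn \<delta> (i - \<delta> i) \<le> nn \<delta> i" by simp
  then show ?thesis using a by (simp add: per_def nn_Suc)
qed

lemma wd_fresh: "fresh \<delta> i \<Longrightarrow> wd \<delta> (nn \<delta> i) = nn \<delta> i"
  using idx_eq[of \<delta> i "nn \<delta> i"] per_fresh[of \<delta> i]
  by (subst wd.simps) simp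

definition periodic :: "(nat \<Rightarrow> 'a) \<Rightarrow> nat \<Rightarrow> nat \<Rightarrow> bool" where
  "periodic w p L \<longleftrightarrow> (\<forall>t. p \<le> t \<and> t < L \<longrightarrow> w t = w (t - p))"

lemma periodic_mono: "periodic w p L \<Longrightarrow> L' \<le> L \<Longrightarrow> periodic w p L'"
  unfolding periodic_def by (meson less_le_trans)

lemma pal_extend:
  assumes per: "periodic w p N" and pal: "pal_prefix w (N - p)" and pN: "p \<le> N"
    and h: "2 * p \<le> N + 1"
  shows "pal_prefix w N"
proof -
  have key: "w t = w (N - 1 - t)" if "t < N" "t \<le> N - 1 - t" for t
  proof (cases "t = N - 1 - t")
    case True then show ?thesis by simp
  next
    case False
    let ?s = "N - 1 - t"
    have ts: "t < ?s" using that False by linarith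
    have sp: "p \<le> ?s" using ts h that by linarith
    have sN: "?s < N" using that by linarith
    have s1: "w ?s = w (?s - p)" using per sp sN unfolding periodic_def by blast
    have tl: "t < N - p" using ts h by linarith
    have "w t = w (N - p - 1 - t)" using pal tl unfolding pal_prefix_def by blast
    moreover have "N - p - 1 - t = ?s - p" using tl by linarith
    ultimately show ?thesis using s1 by argo
  qed
  show ?thesis unfolding pal_prefix_def
  proof (intro allI impI)
    fix t assume t: "t < N"
    show "w t = w (N - 1 - t)"
    proof (cases "t \<le> N - 1 - t")
      case True then show ?thesis using key t by blast
    next
      case False
      have "N - 1 - t < N" using t by linarith
      moreover have "N - 1 - t \<le> N - 1 - (N - 1 - t)" using False t by linarith
      ultimately have "w (N - 1 - t) = w (N - 1 - (N - 1 - t))" using key by blast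
      moreover have "N - 1 - (N - 1 - t) = t" using t by linarith
      ultimately show ?thesis by argo
    qed
  qed
qed

lemma pal_border:
  assumes pal: "pal_prefix w N" and per: "periodic w g N" and g: "g \<le> N"
  shows "pal_prefix w (N - g)"
  unfolding pal_prefix_def
proof (intro allI impI)
  fix t assume t: "t < N - g"
  have i: "N - g - 1 - t < N" using t by linarith
  have "w (N - g - 1 - t) = w (N - 1 - (N - g - 1 - t))"
    using pal i unfolding pal_prefix_def by blast
  moreover have "N - 1 - (N - g - 1 - t) = t + g" using t by linarith
  moreover have tg: "g \<le> t + g \<and> t + g < N" using t by linarith
  then have "w (t + g) = w (t + g - g)" using per unfolding periodic_def by blast
  then have "w (t + g) = w t" by simp
  ultimately show "w t = w (N - g - 1 - t)" by argo
qed

lemma periodic_diff: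
  assumes P: "periodic w p L" and Q: "periodic w q L" and L: "p + q \<le> L" and qp: "q < p"
  shows "periodic w (p - q) L"
  unfolding periodic_def
proof (intro allI impI)
  fix t assume t: "p - q \<le> t \<and> t < L"
  show "w t = w (t - (p - q))"
  proof (cases "t + q < L")
    case True
    have c1: "q \<le> t + q \<and> t + q < L" using True by linarith
    have "w (t + q) = w (t + q - q)" using Q c1 unfolding periodic_def by blast
    then have "w (t + q) = w t" by simp
    moreover have c2: "p \<le> t + q \<and> t + q < L" using True t by linarith
    have "w (t + q) = w (t + q - p)" using P c2 unfolding periodic_def by blast
    moreover have "t + q - p = t - (p - q)" using t qp by linarith
    ultimately show ?thesis by argo
  next
    case False
    then have tp: "p \<le> t" using L by linarith
    have "w t = w (t - p)" using P tp t unfolding periodic_def by blast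
    moreover have c3: "q \<le> t - p + q \<and> t - p + q < L" using t qp tp by linarith
    have "w (t - p + q) = w (t - p + q - q)" using Q c3 unfolding periodic_def by blast
    then have "w (t - p + q) = w (t - p)" by simp
    moreover have "t - p + q = t - (p - q)" using tp qp by linarith
    ultimately show ?thesis by argo
  qed
qed

lemma fine_wilf_weak:
  assumes "periodic w p L" "periodic w q L" "p + q \<le> L"
  shows "periodic w (gcd p q) L"
  using assms
proof (induction "p + q" arbitrary: p q rule: less_induct)
  case less
  show ?case
  proof (cases "p = 0 \<or> q = 0 \<or> p = q")
    case True
    then show ?thesis using less.prems by auto
  next
    case False
    then have pq: "0 < p" "0 < q" "p \<noteq> q" by auto
    show ?thesis
    proof (cases "q < p")
      case True
      have new: "periodic w (p - q) L" using periodic_diff[OF less.prems True] .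
      have "periodic w (gcd (p - q) q) L"
        using less.hyps[of "p - q" q] new less.prems True pq by fastforce
      moreover have "gcd (p - q) q = gcd p q"
        using True gcd_diff1_nat[of q p] by (simp add: gcd.commute)
      ultimately show ?thesis by simp
    next
      case False
      then have qp: "p < q" using pq by linarith
      have new: "periodic w (q - p) L"
        using periodic_diff[OF less.prems(2) less.prems(1) _ qp] less.prems(3) by simp
      have "periodic w (gcd p (q - p)) L"
        using less.hyps[of p "q - p"] new less.prems qp pq by fastforce
      moreover have "gcd p (q - p) = gcd p q"
        using qp gcd_diff1_nat[of p q] by (simp add: gcd.commute)
      ultimately show ?thesis by simp
    qed
  qed
qed

lemma pal_pal_periodic:
  assumes "pal_prefix w m" "pal_prefix w P" "P \<le> m"
  shows "periodic w (m - P) m"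
  unfolding periodic_def
proof (intro allI impI)
  fix t assume t: "m - P \<le> t \<and> t < m"
  have "w t = w (m - 1 - t)" using assms(1) t unfolding pal_prefix_def by blast
  moreover have "m - 1 - t < P" using t assms(3) by linarith
  then have "w (m - 1 - t) = w (P - 1 - (m - 1 - t))" using assms(2) unfolding pal_prefix_def by blast
  moreover have "P - 1 - (m - 1 - t) = t - (m - P)" using t assms(3) by linarith
  ultimately show "w t = w (t - (m - P))" by argo
qed

lemma wd_pal_per:
  "pal_prefix (wd \<delta>) (nn \<delta> i) \<and> periodic (wd \<delta>) (per \<delta> i) (nn \<delta> (Suc i))"
proof (induction i rule: less_induct)
  case (less i)
  have palI: "pal_prefix (wd \<delta>) (nn \<delta> i)"
  proof (cases i)
    case 0 then show ?thesis by (simp add: pal_prefix_def)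
  next
    case (Suc i')
    then have ih: "pal_prefix (wd \<delta>) (nn \<delta> i') \<and> periodic (wd \<delta>) (per \<delta> i') (nn \<delta> (Suc i'))"
      using less.IH by simp
    have pN: "per \<delta> i' \<le> nn \<delta> (Suc i')" unfolding per_def by simp
    have st: "nn \<delta> i' < nn \<delta> (Suc i')" by (rule nn_step)
    have eq: "nn \<delta> (Suc i') - per \<delta> i' = nn \<delta> i'" unfolding per_def using st by linarith
    have h: "2 * per \<delta> i' \<le> nn \<delta> (Suc i') + 1"
    proof (cases "fresh \<delta> i'")
      case True then show ?thesis using per_fresh[of \<delta> i'] by (simp add: nn_Suc)
    next
      case False then show ?thesis using per_nonfresh[of \<delta> i'] by (simp add: per_def nn_Suc)
    qed
    show ?thesis using pal_extend[OF ih[THEN conjunct2] _ pN h] ih eq Suc by simp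
  qed
  have perI: "periodic (wd \<delta>) (per \<delta> i) (nn \<delta> (Suc i))"
    unfolding periodic_def
  proof (intro allI impI)
    fix t assume t: "per \<delta> i \<le> t \<and> t < nn \<delta> (Suc i)"
    show "wd \<delta> t = wd \<delta> (t - per \<delta> i)"
    proof (cases "nn \<delta> i \<le> t")
      case True then show ?thesis using wd_per t by blast
    next
      case False
      then have tl: "t < nn \<delta> i" by simp
      have nf: "\<not> fresh \<delta> i"
        using t tl per_fresh[of \<delta> i] by auto
      let ?j = "i - \<delta> i"
      have jl: "?j < i" using nf unfolding fresh_def by auto
      have palj: "pal_prefix (wd \<delta>) (nn \<delta> ?j)" using less.IH[OF jl] by simp
      have pe: "per \<delta> i = nn \<delta> i - nn \<delta> ?j" using per_nonfresh[OF nf] .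
      have jle: "nn \<delta> ?j \<le> nn \<delta> i" by simp
      have a: "wd \<delta> t = wd \<delta> (nn \<delta> i - 1 - t)" using palI tl unfolding pal_prefix_def by blast
      have b: "nn \<delta> i - 1 - t < nn \<delta> ?j" using t pe jle tl by linarith
      have c: "wd \<delta> (nn \<delta> i - 1 - t) = wd \<delta> (nn \<delta> ?j - 1 - (nn \<delta> i - 1 - t))"
        using palj b unfolding pal_prefix_def by blast
      have d: "nn \<delta> ?j - 1 - (nn \<delta> i - 1 - t) = t - per \<delta> i" using pe jle tl t b by linarith
      show ?thesis using a c d by simp
    qed
  qed
  show ?case using palI perI by blast
qed

definition valid :: "(nat \<Rightarrow> nat) \<Rightarrow> nat \<Rightarrow> bool" where
  "valid \<delta> i \<longleftrightarrow> fresh \<delta> i \<or>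
     (\<forall>j'. i - \<delta> i < j' \<and> j' < i \<longrightarrow> \<not> (nn \<delta> i - nn \<delta> j') dvd (nn \<delta> i - nn \<delta> (i - \<delta> i)))"

lemma pal_in_range:
  assumes V: "\<And>i. valid \<delta> i"
  shows "pal_prefix (wd \<delta>) m \<Longrightarrow> m \<in> range (nn \<delta>)"
proof (induction m rule: less_induct)
  case (less m)
  let ?i = "idx \<delta> m"
  have b1: "nn \<delta> ?i \<le> m" and b2: "m < nn \<delta> (Suc ?i)" using idx_bounds by blast+
  show ?case
  proof (cases "m = nn \<delta> ?i")
    case True then show ?thesis by simp
  next
    case False
    with b1 have gt: "nn \<delta> ?i < m" by simp
    have palI: "pal_prefix (wd \<delta>) (nn \<delta> ?i)" using wd_pal_per by blast
    show ?thesis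
    proof (cases "fresh \<delta> ?i")
      case True
      have "m \<le> 2 * nn \<delta> ?i" using b2 True by (simp add: nn_Suc)
      then have lt: "m - 1 - nn \<delta> ?i < nn \<delta> ?i" using gt by linarith
      have "wd \<delta> (nn \<delta> ?i) = wd \<delta> (m - 1 - nn \<delta> ?i)"
        using less.prems gt unfolding pal_prefix_def by blast
      moreover have "wd \<delta> (m - 1 - nn \<delta> ?i) < nn \<delta> ?i" using wd_le lt le_less_trans by blast
      ultimately show ?thesis using wd_fresh[OF True] by linarith
    next
      case nf: False
      let ?j = "?i - \<delta> ?i"
      let ?p = "per \<delta> ?i" and ?q = "m - nn \<delta> ?i"
      have pe: "?p = nn \<delta> ?i - nn \<delta> ?j" using per_nonfresh[OF nf] .
      have jl: "?j < ?i" using nf unfolding fresh_def by auto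
      then have jle: "nn \<delta> ?j < nn \<delta> ?i" by simp
      have q0: "0 < ?q" using gt by simp
      have qp: "?q < ?p" using b1 b2 unfolding per_def by linarith
      have perq: "periodic (wd \<delta>) ?q m" using pal_pal_periodic[OF less.prems palI] gt by simp
      have perp: "periodic (wd \<delta>) ?p m"
        using wd_pal_per[of \<delta> ?i] periodic_mono b2 by (meson less_imp_le)
      have L: "?p + ?q \<le> m" using pe gt by linarith
      let ?g = "gcd ?p ?q"
      have perg: "periodic (wd \<delta>) ?g m" using fine_wilf_weak[OF perp perq L] .
      have g0: "0 < ?g" using q0 by simp
      have gq: "?g \<le> ?q" using q0 by (simp add: gcd_le2_nat)
      have gn: "?g \<le> nn \<delta> ?i" using gq qp pe by linarith
      have perg': "periodic (wd \<delta>) ?g (nn \<delta> ?i)" using periodic_mono[OF perg] gt by simp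
      have palg: "pal_prefix (wd \<delta>) (nn \<delta> ?i - ?g)" using pal_border[OF palI perg' gn] .
      have "nn \<delta> ?i - ?g < m" using gt g0 by linarith
      from less.IH[OF this palg] obtain j' where j': "nn \<delta> ?i - ?g = nn \<delta> j'" by auto
      have "nn \<delta> ?j < nn \<delta> j'" using j' gq qp pe by linarith
      then have "?j < j'" by simp
      moreover have "nn \<delta> j' < nn \<delta> ?i" using j' g0 gn by linarith
      then have "j' < ?i" by simp
      moreover have "nn \<delta> ?i - nn \<delta> j' = ?g" using j' gn by linarith
      then have "(nn \<delta> ?i - nn \<delta> j') dvd (nn \<delta> ?i - nn \<delta> ?j)"
        using pe by simp
      ultimately show ?thesis using V[of ?i] nf unfolding valid_def by blast
    qed
  qed
qed

lemma pal_lengths_eq: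
  assumes "\<And>i. valid \<delta> i"
  shows "pal_lengths (wd \<delta>) = range (nn \<delta>)"
  using pal_in_range[OF assms] wd_pal_per unfolding pal_lengths_def by blast

lemma strict_mono_range_eq:
  fixes f g :: "nat \<Rightarrow> nat"
  assumes "strict_mono f" "strict_mono g" "range f = range g"
  shows "f = g"
proof
  fix n show "f n = g n"
  proof (induction n rule: less_induct)
    case (less n)
    have "f n \<in> range g" using assms(3) by blast
    then obtain a where a: "f n = g a" by blast
    have "g n \<in> range f" using assms(3) by blast
    then obtain b where b: "g n = f b" by blast
    show ?case
    proof (cases a n rule: linorder_cases)
      case less
      then have "f n = f a" using a less.IH by simp
      then have "n = a" using strict_mono_eq[OF assms(1)] by blast
      then show ?thesis using less by simp
    next
      case equal then show ?thesis using a by simp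
    next
      case greater
      have "g n < g a" using greater assms(2) strict_mono_less by blast
      then have "f b < f n" using a b by simp
      then have "b < n" using assms(1) strict_mono_less by blast
      then have "g n = g b" using b less.IH by simp
      then have "n = b" using assms(2) strict_mono_eq by blast
      then show ?thesis using \<open>b < n\<close> by simp
    qed
  qed
qed

lemma plen_eq:
  assumes "\<And>i. valid \<delta> i"
  shows "plen (wd \<delta>) = nn \<delta>"
proof -
  have inf: "infinite (range (nn \<delta>))"
  proof
    assume "finite (range (nn \<delta>))"
    moreover have "inj (nn \<delta>)" using nn_strict_mono strict_mono_imp_inj_on by blast
    ultimately show False using finite_imageD infinite_UNIV_nat by blast
  qed
  have "enumerate (range (nn \<delta>)) = nn \<delta>"
    by (rule strict_mono_range_eq) (use inf range_enumerate strict_mono_enumerate nn_strict_mono in auto)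
  then show ?thesis unfolding plen_def[abs_def] pal_lengths_eq[OF assms] by simp
qed

lemma abundant_wd:
  assumes "\<And>i. valid \<delta> i"
  shows "abundant (wd \<delta>)"
proof -
  have inf: "infinite (range (nn \<delta>))"
  proof
    assume "finite (range (nn \<delta>))"
    moreover have "inj (nn \<delta>)" using nn_strict_mono strict_mono_imp_inj_on by blast
    ultimately show False using finite_imageD infinite_UNIV_nat by blast
  qed
  show ?thesis unfolding abundant_def plen_eq[OF assms] pal_lengths_eq[OF assms]
    using inf by (auto simp: nn_Suc)
qed

lemma delta_wd:
  assumes "\<And>i. valid \<delta> i"
  shows "delta (wd \<delta>) = limsup (\<lambda>i. ereal (real (nn \<delta> (Suc i)) / real (nn \<delta> i)))"
  unfolding delta_def plen_eq[OF assms] ..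

definition pat :: "nat \<Rightarrow> nat \<Rightarrow> nat \<Rightarrow> nat" where
  "pat m k r = (if r < k then 2
     else if r - k < 3 * m then (if (r - k) mod 3 = 0 then 1 else if (r - k) mod 3 = 1 then 3 else 2)
     else if r - k = 3 * m then 1 else 3)"

definition dl :: "nat \<Rightarrow> nat \<Rightarrow> nat \<Rightarrow> nat" where
  "dl m k i = (if i < 2 then 0 else pat m k ((i - 2) mod (k + 3 * m + 3)))"

lemma ndvd_between:
  fixes p q c :: nat
  assumes "0 < q" "c * q < p" "p < c * q + q"
  shows "\<not> q dvd p"
proof
  assume "q dvd p"
  then obtain x where x: "p = q * x" by blast
  then have "c * q < x * q" using assms(2) by (simp add: mult.commute)
  then have "c < x" by simp
  moreover have "q * x < q * Suc c" using assms(3) x by (metis add.commute mult.commute mult_Suc_right)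
  then have "x < Suc c" using mult_less_cancel1[of q x "Suc c"] by blast
  ultimately show False by simp
qed

locale fam =
  fixes m k :: nat
  assumes m1: "1 \<le> m" and k10: "10 \<le> k"
begin

definition PP :: nat where "PP = k + 3 * m + 3"

abbreviation "\<delta> \<equiv> dl m k"
abbreviation "n \<equiv> nn (dl m k)"

lemma PP_gt: "k + 3 * m + 2 < PP" unfolding PP_def by simp

lemma dl_pat: "2 \<le> i \<Longrightarrow> \<delta> i = pat m k ((i - 2) mod PP)"
  unfolding dl_def PP_def by simp

lemma pos_mod: "r < PP \<Longrightarrow> (2 + b * PP + r - 2) mod PP = r"
  by simp

lemma dl_at: "r < PP \<Longrightarrow> \<delta> (2 + b * PP + r) = pat m k r"
  using dl_pat[of "2 + b * PP + r"] by simp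

lemma pat_range: "r < PP \<Longrightarrow> pat m k r \<in> {1, 2, 3}"
  unfolding pat_def by auto

lemma dl_range: "2 \<le> i \<Longrightarrow> \<delta> i \<in> {1, 2, 3}"
  using dl_pat pat_range PP_gt by simp

lemma decomp: "2 \<le> i \<Longrightarrow> i = 2 + ((i - 2) div PP) * PP + (i - 2) mod PP \<and> (i - 2) mod PP < PP"
proof -
  assume i: "2 \<le> i"
  have "(i - 2) div PP * PP + (i - 2) mod PP = i - 2" by (rule div_mult_mod_eq)
  moreover have "(i - 2) mod PP < PP" using PP_gt by simp
  ultimately show ?thesis using i by linarith
qed

lemma dl_le: "2 \<le> i \<Longrightarrow> \<delta> i \<le> i"
proof -
  assume i: "2 \<le> i"
  have "pat m k ((i - 2) mod PP) \<le> i"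
  proof (cases "pat m k ((i - 2) mod PP) = 3")
    case True
    then have "k \<le> (i - 2) mod PP" unfolding pat_def by (auto split: if_splits)
    then have "k \<le> i - 2" by (meson le_trans mod_less_eq_dividend)
    then show ?thesis using True k10 by linarith
  next
    case False
    then show ?thesis using dl_range[OF i] dl_pat[OF i] i by auto
  qed
  then show ?thesis using dl_pat[OF i] by simp
qed

lemma fresh_iff: "fresh \<delta> i \<longleftrightarrow> i < 2"
proof
  assume "fresh \<delta> i"
  then show "i < 2" using dl_range dl_le unfolding fresh_def by (metis insertE not_le
        singletonD zero_neq_numeral one_neq_zero)
next
  assume "i < 2" then show "fresh \<delta> i" unfolding fresh_def dl_def by simp
qed

lemma n0: "n 0 = 0" by simp
lemma n1: "n (Suc 0) = 1" by (simp add: nn_Suc fresh_iff)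
lemma n2: "n 2 = 3"
  using n1 by (simp add: numeral_2_eq_2 nn_Suc fresh_iff)

lemma n_rec: "2 \<le> i \<Longrightarrow> n (Suc i) = 2 * n i - n (i - \<delta> i)"
  by (simp add: nn_Suc fresh_iff)

lemma n_rec_real: "2 \<le> i \<Longrightarrow> real (n (Suc i)) = 2 * real (n i) - real (n (i - \<delta> i))"
proof -
  assume i: "2 \<le> i"
  have "n (i - \<delta> i) \<le> n i" by simp
  then have le: "n (i - \<delta> i) \<le> 2 * n i" by linarith
  have "real (n (Suc i)) = real (2 * n i - n (i - \<delta> i))" using n_rec[OF i] by simp
  also have "\<dots> = 2 * real (n i) - real (n (i - \<delta> i))" using le by (simp add: of_nat_diff)
  finally show ?thesis .
qed

end

lemma D_strict:
  assumes "1 \<le> u" "fresh \<delta> u \<or> 2 \<le> \<delta> u"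
  shows "nn \<delta> u - nn \<delta> (u - 1) < nn \<delta> (Suc u) - nn \<delta> u"
proof (cases "fresh \<delta> u")
  case True
  have "nn \<delta> u - nn \<delta> (u - 1) \<le> nn \<delta> u" by simp
  then show ?thesis using True by (simp add: nn_Suc)
next
  case False
  with assms have d: "2 \<le> \<delta> u" "\<delta> u \<le> u" unfolding fresh_def by auto
  have a: "nn \<delta> (u - \<delta> u) \<le> nn \<delta> (u - 2)" using d by simp
  have b: "nn \<delta> (u - 2) < nn \<delta> (u - 1)" using d by simp
  have c: "nn \<delta> (u - 1) < nn \<delta> u" using assms(1) by simp
  have "nn \<delta> (Suc u) = 2 * nn \<delta> u - nn \<delta> (u - \<delta> u)" using False by (simp add: nn_Suc)
  then show ?thesis using a b c by linarith
qed

lemma D_one: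
  assumes "\<not> fresh \<delta> u" "\<delta> u = 1"
  shows "nn \<delta> (Suc u) = 2 * nn \<delta> u - nn \<delta> (u - 1)"
  using assms by (simp add: nn_Suc)

lemma D_mono:
  assumes "1 \<le> u"
  shows "nn \<delta> u - nn \<delta> (u - 1) \<le> nn \<delta> (Suc u) - nn \<delta> u"
proof (cases "fresh \<delta> u \<or> 2 \<le> \<delta> u")
  case True then show ?thesis using D_strict[OF assms True] by simp
next
  case False
  then have "\<delta> u = 1" "\<not> fresh \<delta> u" unfolding fresh_def by auto
  then show ?thesis using D_one by simp
qed

context fam
begin

definition sb :: "nat \<Rightarrow> nat" where "sb b = 2 + b * PP"
definition eb :: "nat \<Rightarrow> nat" where "eb b = sb b + k"
definition fb :: "nat \<Rightarrow> nat" where "fb b = eb b + 3 * m"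

lemma sb_Suc: "sb (Suc b) = fb b + 3"
  unfolding sb_def eb_def fb_def PP_def by simp

lemma eb_ge: "12 \<le> eb b" unfolding eb_def sb_def using k10 by simp

lemma dl_tail: "r < k \<Longrightarrow> \<delta> (sb b + r) = 2"
  using dl_at[of r b] PP_gt unfolding sb_def pat_def by simp

lemma pat_a1: "t \<le> m \<Longrightarrow> pat m k (k + 3 * t) = 1"
  unfolding pat_def by auto

lemma pat_a3: "t \<le> m \<Longrightarrow> pat m k (k + 3 * t + 1) = 3"
proof -
  assume t: "t \<le> m"
  have "(3 * t + 1) mod 3 = 1" by presburger
  moreover have "3 * t + 1 \<noteq> 3 * m" by presburger
  ultimately show ?thesis using t unfolding pat_def by auto
qed

lemma pat_a2: "t < m \<Longrightarrow> pat m k (k + 3 * t + 2) = 2"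
proof -
  assume t: "t < m"
  have "(3 * t + 2) mod 3 = 2" by presburger
  then show ?thesis using t unfolding pat_def by auto
qed

lemma pat_sp: "pat m k (k + 3 * m + 2) = 3"
  unfolding pat_def by auto

lemma dl_a1: "t \<le> m \<Longrightarrow> \<delta> (eb b + 3 * t) = 1"
proof -
  assume t: "t \<le> m"
  have r: "k + 3 * t < PP" using t PP_gt by simp
  have eq: "eb b + 3 * t = 2 + b * PP + (k + 3 * t)" unfolding eb_def sb_def by simp
  show ?thesis unfolding eq dl_at[OF r] pat_a1[OF t] ..
qed

lemma dl_a3: "t \<le> m \<Longrightarrow> \<delta> (eb b + 3 * t + 1) = 3"
proof -
  assume t: "t \<le> m"
  have r: "k + 3 * t + 1 < PP" using t PP_gt by simp
  have eq: "eb b + 3 * t + 1 = 2 + b * PP + (k + 3 * t + 1)" unfolding eb_def sb_def by simp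
  show ?thesis unfolding eq dl_at[OF r] pat_a3[OF t] ..
qed

lemma dl_a2: "t < m \<Longrightarrow> \<delta> (eb b + 3 * t + 2) = 2"
proof -
  assume t: "t < m"
  have r: "k + 3 * t + 2 < PP" using t PP_gt by simp
  have eq: "eb b + 3 * t + 2 = 2 + b * PP + (k + 3 * t + 2)" unfolding eb_def sb_def by simp
  show ?thesis unfolding eq dl_at[OF r] pat_a2[OF t] ..
qed

lemma dl_sp: "\<delta> (fb b + 2) = 3"
proof -
  have r: "k + 3 * m + 2 < PP" using PP_gt by simp
  have eq: "fb b + 2 = 2 + b * PP + (k + 3 * m + 2)" unfolding fb_def eb_def sb_def by simp
  show ?thesis unfolding eq dl_at[OF r] pat_sp ..
qed

lemma categories:
  assumes "2 \<le> i"
  shows "\<exists>b. (\<exists>r<k. i = sb b + r) \<or> (\<exists>t\<le>m. i = eb b + 3 * t) \<or> (\<exists>t\<le>m. i = eb b + 3 * t + 1)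
     \<or> (\<exists>t<m. i = eb b + 3 * t + 2) \<or> i = fb b + 2"
proof -
  obtain b r where i: "i = 2 + b * PP + r" and r: "r < PP" using decomp[OF assms] by blast
  show ?thesis
  proof (cases "r < k")
    case True then show ?thesis using i unfolding sb_def by blast
  next
    case False
    let ?u = "r - k"
    have u: "?u < 3 * m + 3" using r False unfolding PP_def by linarith
    have iu: "i = eb b + ?u" using i False unfolding eb_def sb_def by simp
    have dm: "?u = 3 * (?u div 3) + ?u mod 3" by simp
    have dv: "?u div 3 \<le> m" using u by simp
    have "?u mod 3 < 3" by simp
    then consider "?u mod 3 = 0" | "?u mod 3 = 1" | "?u mod 3 = 2" by linarith
    then show ?thesis
    proof cases
      case 1
      then have "i = eb b + 3 * (?u div 3)" using dm iu by linarith
      then show ?thesis using dv by blast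
    next
      case 2
      then have "i = eb b + 3 * (?u div 3) + 1" using dm iu by linarith
      then show ?thesis using dv by blast
    next
      case 3
      then have a: "?u = 3 * (?u div 3) + 2" "?u div 3 \<le> m" using dm dv by linarith+
      show ?thesis
      proof (cases "?u div 3 < m")
        case True
        have "i = eb b + 3 * (?u div 3) + 2" using a iu by linarith
        then show ?thesis using True by blast
      next
        case False
        then have "?u div 3 = m" using a by simp
        then have "i = fb b + 2" using a iu unfolding fb_def by simp
        then show ?thesis by blast
      qed
    qed
  qed
qed

lemma nonfresh: "2 \<le> i \<Longrightarrow> \<not> fresh \<delta> i" using fresh_iff by simp

lemma two_aux: "(x::nat) < y \<Longrightarrow> y < z \<Longrightarrow> y - x < z - y \<Longrightarrow> \<not> (z - y) dvd (z - x)"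
  by (rule ndvd_between[where c=1]) linarith+

lemma three1_aux:
  fixes a b c d :: nat
  assumes "a < b" "b < c" "c < d" "d - c = c - b" "b - a < c - b"
  shows "\<not> (d - c) dvd (d - a) \<and> \<not> (d - b) dvd (d - a)"
proof
  show "\<not> (d - c) dvd (d - a)" by (rule ndvd_between[where c=2]) (use assms in linarith)+
  show "\<not> (d - b) dvd (d - a)" by (rule ndvd_between[where c=1]) (use assms in linarith)+
qed

lemma three2_aux:
  fixes a' a b c d :: nat
  assumes "a' < a" "a < b" "b < c" "c < d" "d - c = c - a'" "b - a \<le> c - b"
  shows "\<not> (d - c) dvd (d - a) \<and> \<not> (d - b) dvd (d - a)"
proof
  show "\<not> (d - c) dvd (d - a)" by (rule ndvd_between[where c=1]) (use assms in linarith)+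
  show "\<not> (d - b) dvd (d - a)" by (rule ndvd_between[where c=1]) (use assms in linarith)+
qed

lemma rec_diff: "(d::nat) = 2 * c - b \<Longrightarrow> b < c \<Longrightarrow> d - c = c - b" by linarith

lemma valid_all: "valid \<delta> i"
proof (cases "i < 2")
  case True then show ?thesis unfolding valid_def using fresh_iff by simp
next
  case False
  then have i2: "2 \<le> i" by simp
  obtain b where cat: "(\<exists>r<k. i = sb b + r) \<or> (\<exists>t\<le>m. i = eb b + 3 * t) \<or> (\<exists>t\<le>m. i = eb b + 3 * t + 1)
     \<or> (\<exists>t<m. i = eb b + 3 * t + 2) \<or> i = fb b + 2" using categories[OF i2] by blast
  have two: "valid \<delta> i" if d2: "\<delta> i = 2" and pre: "fresh \<delta> (i - 1) \<or> 2 \<le> \<delta> (i - 1)"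
  proof -
    have "1 \<le> i - 1" using i2 by simp
    from D_strict[OF this pre] have ds: "n (i - 1) - n (i - 1 - 1) < n (Suc (i - 1)) - n (i - 1)" .
    have e1: "Suc (i - 1) = i" using i2 by simp
    have e2: "i - 1 - 1 = i - 2" by simp
    have ds': "n (i - 1) - n (i - 2) < n i - n (i - 1)" using ds unfolding e1 e2 .
    have m1: "n (i - 2) < n (i - 1)" "n (i - 1) < n i" using i2 by simp_all
    have "\<not> (n i - n (i - 1)) dvd (n i - n (i - 2))" using two_aux[OF m1 ds'] .
    moreover have "\<forall>j'. i - 2 < j' \<and> j' < i \<longrightarrow> j' = i - 1" by auto
    ultimately show ?thesis unfolding valid_def using d2 by auto
  qed
  have three1: "valid \<delta> i" if d3: "\<delta> i = 3" and p1: "\<delta> (i - 1) = 1" and p2: "2 \<le> \<delta> (i - 2)"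
    and i4: "4 \<le> i"
  proof -
    have nf1: "\<not> fresh \<delta> (i - 1)" using nonfresh i4 by simp
    have e0: "Suc (i - 1) = i" "i - 1 - 1 = i - 2" using i4 by auto
    have r1: "n i = 2 * n (i - 1) - n (i - 2)"
      using D_one[OF nf1 p1] unfolding e0 .
    have "1 \<le> i - 2" using i4 by simp
    from D_strict[OF this] p2 have ds: "n (i - 2) - n (i - 2 - 1) < n (Suc (i - 2)) - n (i - 2)" by simp
    have e1: "Suc (i - 2) = i - 1" "i - 2 - 1 = i - 3" using i4 by auto
    have ds': "n (i - 2) - n (i - 3) < n (i - 1) - n (i - 2)" using ds unfolding e1 .
    have m: "n (i - 3) < n (i - 2)" "n (i - 2) < n (i - 1)" "n (i - 1) < n i" using i4 by simp_all
    have rd: "n i - n (i - 1) = n (i - 1) - n (i - 2)" using rec_diff[OF r1 m(2)] .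
    have AB: "\<not> (n i - n (i - 1)) dvd (n i - n (i - 3)) \<and> \<not> (n i - n (i - 2)) dvd (n i - n (i - 3))"
      using three1_aux[OF m rd ds'] .
    have "\<forall>j'. i - 3 < j' \<and> j' < i \<longrightarrow> j' = i - 1 \<or> j' = i - 2" by auto
    then show ?thesis unfolding valid_def using d3 AB by auto
  qed
  have three2: "valid \<delta> i" if d3: "\<delta> i = 3" and p1: "\<delta> (i - 1) = 3" and i5: "5 \<le> i"
  proof -
    have e0: "Suc (i - 1) = i" "i - 1 - 3 = i - 4" using i5 by auto
    have r1: "n i = 2 * n (i - 1) - n (i - 4)"
      using n_rec[of "i - 1"] p1 i5 unfolding e0 by simp
    have m: "n (i - 4) < n (i - 3)" "n (i - 3) < n (i - 2)" "n (i - 2) < n (i - 1)" "n (i - 1) < n i"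
      using i5 by simp_all
    have e1: "Suc (i - 2) = i - 1" "i - 2 - 1 = i - 3" using i5 by auto
    have dm: "n (i - 2) - n (i - 3) \<le> n (i - 1) - n (i - 2)"
      using D_mono[of "i - 2" \<delta>] i5 unfolding e1 by simp
    have m4: "n (i - 4) < n (i - 1)" using m by linarith
    have rd: "n i - n (i - 1) = n (i - 1) - n (i - 4)" using rec_diff[OF r1 m4] .
    have AB: "\<not> (n i - n (i - 1)) dvd (n i - n (i - 3)) \<and> \<not> (n i - n (i - 2)) dvd (n i - n (i - 3))"
      using three2_aux[OF m rd dm] .
    have "\<forall>j'. i - 3 < j' \<and> j' < i \<longrightarrow> j' = i - 1 \<or> j' = i - 2" by auto
    then show ?thesis unfolding valid_def using d3 AB by auto
  qed
  from cat show ?thesis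
  proof (elim disjE exE conjE)
    fix r assume r: "r < k" and i: "i = sb b + r"
    have d: "\<delta> i = 2" using dl_tail[OF r] i by simp
    show ?thesis
    proof (cases r)
      case 0
      show ?thesis
      proof (cases b)
        case 0
        then have "i = 2" using i \<open>r = 0\<close> unfolding sb_def by simp
        then show ?thesis using two[OF d] fresh_iff by simp
      next
        case (Suc b')
        then have "i - 1 = fb b' + 2" using i \<open>r = 0\<close> sb_Suc by simp
        then show ?thesis using two[OF d] dl_sp by simp
      qed
    next
      case (Suc r')
      then have "i - 1 = sb b + r'" "r' < k" using i r by auto
      then show ?thesis using two[OF d] dl_tail by simp
    qed
  next
    fix t assume "t \<le> m" "i = eb b + 3 * t"
    then have "\<delta> i = 1" using dl_a1 by simp
    then show ?thesis unfolding valid_def by auto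
  next
    fix t assume t: "t \<le> m" and i: "i = eb b + 3 * t + 1"
    have d: "\<delta> i = 3" using dl_a3[OF t] i by simp
    have p1: "\<delta> (i - 1) = 1" using dl_a1[OF t] i by simp
    have p2: "\<delta> (i - 2) = 2"
    proof (cases t)
      case 0
      then have "i - 2 = sb b + (k - 1)" using i k10 unfolding eb_def by simp
      then show ?thesis using dl_tail[of "k - 1" b] k10 by simp
    next
      case (Suc t')
      then have "i - 2 = eb b + 3 * t' + 2" "t' < m" using i t by auto
      then show ?thesis using dl_a2 by simp
    qed
    have "4 \<le> i" using i eb_ge[of b] by simp
    then show ?thesis using three1[OF d p1] p2 by simp
  next
    fix t assume t: "t < m" and i: "i = eb b + 3 * t + 2"
    have d: "\<delta> i = 2" using dl_a2[OF t] i by simp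
    have "\<delta> (i - 1) = 3" using dl_a3[of t b] t i by simp
    then show ?thesis using two[OF d] by simp
  next
    assume i: "i = fb b + 2"
    have d: "\<delta> i = 3" using dl_sp i by simp
    have "\<delta> (i - 1) = 3" using dl_a3[of m b] i unfolding fb_def by simp
    moreover have "5 \<le> i" using i eb_ge[of b] unfolding fb_def by simp
    ultimately show ?thesis using three2[OF d] by simp
  qed
qed

end

context fam
begin

abbreviation N :: "nat \<Rightarrow> real" where "N i \<equiv> real (n i)"

lemma N_rec: "2 \<le> i \<Longrightarrow> \<delta> i = d \<Longrightarrow> N (Suc i) = 2 * N i - N (i - d)"
  using n_rec_real by simp

lemma rT: "r < k \<Longrightarrow> N (sb b + r + 1) = 2 * N (sb b + r) - N (sb b + r - 2)"
  using N_rec[of "sb b + r" 2] dl_tail[of r b] unfolding sb_def by simp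

lemma rA1: "t \<le> m \<Longrightarrow> N (eb b + 3 * t + 1) = 2 * N (eb b + 3 * t) - N (eb b + 3 * t - 1)"
  using N_rec[of "eb b + 3 * t" 1] dl_a1[of t b] eb_ge[of b] by simp

lemma rA3: "t \<le> m \<Longrightarrow> N (eb b + 3 * t + 2) = 2 * N (eb b + 3 * t + 1) - N (eb b + 3 * t - 2)"
proof -
  assume t: "t \<le> m"
  have e: "eb b + 3 * t + 1 - 3 = eb b + 3 * t - 2" using eb_ge[of b] by simp
  show ?thesis using N_rec[of "eb b + 3 * t + 1" 3] dl_a3[OF t, of b] eb_ge[of b] e by simp
qed

lemma rA2: "t < m \<Longrightarrow> N (eb b + 3 * t + 3) = 2 * N (eb b + 3 * t + 2) - N (eb b + 3 * t)"
proof -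
  assume t: "t < m"
  show ?thesis using N_rec[of "eb b + 3 * t + 2" 2] dl_a2[OF t, of b] eb_ge[of b]
    by (simp add: numeral_3_eq_3)
qed

lemma rSP: "N (fb b + 3) = 2 * N (fb b + 2) - N (fb b - 1)"
proof -
  have e: "fb b + 2 - 3 = fb b - 1" using eb_ge[of b] unfolding fb_def by simp
  show ?thesis using N_rec[of "fb b + 2" 3] dl_sp[of b] eb_ge[of b] e unfolding fb_def
    by (simp add: numeral_3_eq_3)
qed

definition Qf :: "nat \<Rightarrow> real" where "Qf i = N i - N (i - 1) - N (i - 2)"
definition Ef :: "nat \<Rightarrow> real" where "Ef i = (1 - sqrt 3) * N i + sqrt 3 * N (i - 1) - N (i - 2)"
definition Dd :: "nat \<Rightarrow> real" where "Dd i = N (Suc i) - N i"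

lemma s3sq: "sqrt 3 * sqrt 3 = (3::real)" by simp
lemma s3sq': "sqrt 3 * (sqrt 3 * x) = (3::real) * x" by (simp add: mult.assoc[symmetric])

lemma Q_tail: "r < k \<Longrightarrow> Qf (sb b + r + 1) = Qf (sb b + r)"
proof -
  assume r: "r < k"
  have a: "sb b + r + 1 - 1 = sb b + r" "sb b + r + 1 - 2 = sb b + r - 1" "sb b + r - 1 - 1 = sb b + r - 2"
    unfolding sb_def by simp_all
  show ?thesis unfolding Qf_def a using rT[OF r, of b] a by (simp add: algebra_simps)
qed

lemma Q_e: "Qf (eb b) = Qf (sb b)"
proof -
  have "r \<le> k \<Longrightarrow> Qf (sb b + r) = Qf (sb b)" for r
  proof (induction r)
    case (Suc r)
    then have "r < k" by simp
    from Q_tail[OF this, of b] Suc show ?case by simp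
  qed simp
  then show ?thesis unfolding eb_def by simp
qed

lemma Q_period: "t < m \<Longrightarrow> Qf (eb b + 3 * t + 3) = Qf (eb b + 3 * t)"
proof -
  assume t: "t < m"
  have e: "eb b + 3 * t + 3 - 1 = eb b + 3 * t + 2" "eb b + 3 * t + 3 - 2 = eb b + 3 * t + 1"
    by simp_all
  show ?thesis unfolding Qf_def e using rA1[of t b] rA3[of t b] rA2[OF t, of b] t
    by (simp add: algebra_simps)
qed

lemma E_period: "t < m \<Longrightarrow> Ef (eb b + 3 * t + 3) = (2 - sqrt 3) * Ef (eb b + 3 * t)"
proof -
  assume t: "t < m"
  have e: "eb b + 3 * t + 3 - 1 = eb b + 3 * t + 2" "eb b + 3 * t + 3 - 2 = eb b + 3 * t + 1"
    by simp_all
  have r1: "N (eb b + 3 * t + 1) = 2 * N (eb b + 3 * t) - N (eb b + 3 * t - 1)" using rA1 t by simp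
  have r3: "N (eb b + 3 * t + 2) = 2 * N (eb b + 3 * t + 1) - N (eb b + 3 * t - 2)" using rA3 t by simp
  have r2: "N (eb b + 3 * t + 3) = 2 * N (eb b + 3 * t + 2) - N (eb b + 3 * t)" using rA2 t by simp
  show ?thesis unfolding Ef_def e r2 r3 r1
    by (simp add: algebra_simps s3sq s3sq')
qed

lemma QE_iter: "t \<le> m \<Longrightarrow> Qf (eb b + 3 * t) = Qf (eb b) \<and> Ef (eb b + 3 * t) = (2 - sqrt 3) ^ t * Ef (eb b)"
proof (induction t)
  case 0 then show ?case by simp
next
  case (Suc t)
  then have t: "t < m" by simp
  have e: "eb b + 3 * Suc t = eb b + 3 * t + 3" by simp
  show ?case unfolding e using Q_period[OF t] E_period[OF t] Suc by simp
qed

lemma Q_sp: "Qf (fb b + 3) = Qf (fb b) + N (fb b) - N (fb b - 1)"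
proof -
  let ?f = "fb b"
  have r1: "N (?f + 1) = 2 * N ?f - N (?f - 1)" using rA1[of m b] unfolding fb_def by simp
  have r3: "N (?f + 2) = 2 * N (?f + 1) - N (?f - 2)" using rA3[of m b] unfolding fb_def by simp
  have e: "?f + 3 - 1 = ?f + 2" "?f + 3 - 2 = ?f + 1" by simp_all
  show ?thesis unfolding Qf_def e rSP r3 r1 by (simp add: algebra_simps)
qed

lemma R3: "t \<le> m \<Longrightarrow> N (eb b + 3 * t + 2) - sqrt 3 * N (eb b + 3 * t + 1)
   = (2 - sqrt 3) * ((1 + sqrt 3) * Qf (eb b + 3 * t) + Ef (eb b + 3 * t))"
proof -
  assume t: "t \<le> m"
  have r1: "N (eb b + 3 * t + 1) = 2 * N (eb b + 3 * t) - N (eb b + 3 * t - 1)" using rA1 t by simp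
  have r3: "N (eb b + 3 * t + 2) = 2 * N (eb b + 3 * t + 1) - N (eb b + 3 * t - 2)" using rA3 t by simp
  have e: "eb b + 3 * t - 1 - 1 = eb b + 3 * t - 2" by simp
  show ?thesis unfolding Qf_def Ef_def r3 r1 e by (simp add: algebra_simps s3sq s3sq')
qed

lemma RS: "N (fb b + 3) - sqrt 3 * N (fb b + 2)
   = (2 - sqrt 3) * ((1 + sqrt 3) * Qf (fb b) - sqrt 3 * Ef (fb b))"
proof -
  let ?f = "fb b"
  have r1: "N (?f + 1) = 2 * N ?f - N (?f - 1)" using rA1[of m b] unfolding fb_def by simp
  have r3: "N (?f + 2) = 2 * N (?f + 1) - N (?f - 2)" using rA3[of m b] unfolding fb_def by simp
  have e: "?f - 1 - 1 = ?f - 2" by simp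
  show ?thesis unfolding Qf_def Ef_def rSP r3 r1 e by (simp add: algebra_simps s3sq s3sq')
qed

end

context fam
begin

lemma N_mono: "i \<le> j \<Longrightarrow> N i \<le> N j" by simp
lemma N_smono: "i < j \<Longrightarrow> N i < N j" by simp
lemma N_nonneg: "0 \<le> N i" by simp

lemma Dd_Suc: "Dd u \<le> Dd (Suc u)"
proof -
  have h: "n (Suc u) - n u \<le> n (Suc (Suc u)) - n (Suc u)"
    using D_mono[of "Suc u" \<delta>] by simp
  then have h': "real (n (Suc u) - n u) \<le> real (n (Suc (Suc u)) - n (Suc u))"
    by (simp only: of_nat_le_iff)
  have l1: "n u \<le> n (Suc u)" "n (Suc u) \<le> n (Suc (Suc u))" by simp_all
  have "real (n (Suc u) - n u) = N (Suc u) - N u" using l1(1) by (rule of_nat_diff)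
  moreover have "real (n (Suc (Suc u)) - n (Suc u)) = N (Suc (Suc u)) - N (Suc u)"
    using l1(2) by (rule of_nat_diff)
  ultimately show ?thesis using h' unfolding Dd_def by simp
qed

lemma Dd_le: "i \<le> j \<Longrightarrow> Dd i \<le> Dd j"
  using Dd_Suc by (rule lift_Suc_mono_le)

lemma Dd_pos: "0 < Dd i" unfolding Dd_def by simp

lemma Dd_tail: "r < k \<Longrightarrow> Dd (sb b + r) = Dd (sb b + r - 1) + Dd (sb b + r - 2)"
proof -
  assume r: "r < k"
  have a: "Suc (sb b + r - 1) = sb b + r" "Suc (sb b + r - 2) = sb b + r - 1"
    unfolding sb_def by simp_all
  show ?thesis unfolding Dd_def a using rT[OF r, of b] by simp
qed

lemma tail_growth: "r < k \<Longrightarrow> 2 ^ ((r + 1) div 2) * Dd (sb b - 1) \<le> Dd (sb b + r)"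
proof (induction r rule: less_induct)
  case (less r)
  show ?case
  proof (cases "r < 2")
    case True
    show ?thesis
    proof (cases "r = 0")
      case True
      have "Dd (sb b - 1) \<le> Dd (sb b)" by (rule Dd_le) simp
      then show ?thesis using True by simp
    next
      case False
      then have r1: "r = 1" using \<open>r < 2\<close> by simp
      have "Dd (sb b + 1) = Dd (sb b) + Dd (sb b - 1)" using Dd_tail[of 1 b] less.prems r1 by simp
      moreover have "Dd (sb b - 1) \<le> Dd (sb b)" by (rule Dd_le) simp
      ultimately show ?thesis using r1 by simp
    qed
  next
    case False
    have ih: "2 ^ ((r - 2 + 1) div 2) * Dd (sb b - 1) \<le> Dd (sb b + (r - 2))"
      using less.IH[of "r - 2"] less.prems False by simp
    have t: "Dd (sb b + r) = Dd (sb b + r - 1) + Dd (sb b + r - 2)" using Dd_tail less.prems by simp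
    have mo: "Dd (sb b + r - 2) \<le> Dd (sb b + r - 1)" by (rule Dd_le) simp
    have e: "sb b + (r - 2) = sb b + r - 2" using False by simp
    have ex: "(r + 1) div 2 = Suc ((r - 2 + 1) div 2)" using False by simp
    show ?thesis unfolding ex using ih t mo e by simp
  qed
qed

definition kap :: real where "kap = 2 / 2 ^ (k div 2)"

lemma kap_pos: "0 < kap" unfolding kap_def by simp

lemma kap_le: "kap \<le> 1 / 16"
proof -
  have "5 \<le> k div 2" using k10 by simp
  then have "(2::real) ^ 5 \<le> 2 ^ (k div 2)" by (rule power_increasing) simp
  then show ?thesis unfolding kap_def by (simp add: field_simps)
qed

lemma growth_e: "2 ^ (k div 2) * Dd (sb b - 1) \<le> Dd (eb b - 1)"
proof -
  have "k - 1 < k" using k10 by simp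
  from tail_growth[OF this, of b] have "2 ^ ((k - 1 + 1) div 2) * Dd (sb b - 1) \<le> Dd (sb b + (k - 1))" .
  moreover have "k - 1 + 1 = k" "sb b + (k - 1) = eb b - 1" using k10 unfolding eb_def by simp_all
  ultimately show ?thesis by simp
qed

lemma entry_ratio: "3 / 2 * Dd (eb b - 2) \<le> Dd (eb b - 1)"
proof -
  have k1: "k - 1 < k" "k - 2 < k" using k10 by simp_all
  have e1: "sb b + (k - 1) = eb b - 1" "sb b + (k - 1) - 1 = eb b - 2" "sb b + (k - 1) - 2 = eb b - 3"
    using k10 unfolding eb_def by simp_all
  have e2: "sb b + (k - 2) = eb b - 2" "sb b + (k - 2) - 1 = eb b - 3" "sb b + (k - 2) - 2 = eb b - 4"
    using k10 unfolding eb_def by simp_all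
  have f: "eb b - 1 - 1 = eb b - 2" "eb b - 1 - 2 = eb b - 3" "eb b - 2 - 1 = eb b - 3"
    "eb b - 2 - 2 = eb b - 4" by simp_all
  have a: "Dd (eb b - 1) = Dd (eb b - 2) + Dd (eb b - 3)"
    using Dd_tail[OF k1(1), of b] unfolding e1(1) f .
  have c: "Dd (eb b - 2) = Dd (eb b - 3) + Dd (eb b - 4)"
    using Dd_tail[OF k1(2), of b] unfolding e2(1) f .
  have d: "Dd (eb b - 4) \<le> Dd (eb b - 3)" by (rule Dd_le) simp
  show ?thesis using a c d by simp
qed

lemma Q_inv: "0 \<le> Qf (eb b) \<and> Qf (eb b) \<le> kap * Dd (eb b - 1)"
proof (induction b)
  case 0
  have q: "Qf (eb 0) = 2" using Q_e[of 0] n2 n2[unfolded numeral_2_eq_2] n1 unfolding Qf_def sb_def by simp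
  have d1: "Dd (sb 0 - 1) = 2" using n2 n2[unfolded numeral_2_eq_2] n1 unfolding Dd_def sb_def by simp
  have "2 ^ (k div 2) * 2 \<le> Dd (eb 0 - 1)" using growth_e[of 0] d1 by simp
  then have "kap * (2 ^ (k div 2) * 2) \<le> kap * Dd (eb 0 - 1)" using kap_pos by simp
  moreover have "kap * (2 ^ (k div 2) * 2) = 4" unfolding kap_def by simp
  ultimately show ?case using q by simp
next
  case (Suc b)
  have qf: "Qf (fb b) = Qf (eb b)" using QE_iter[of m b] unfolding fb_def by simp
  have q: "Qf (eb (Suc b)) = Qf (eb b) + Dd (fb b - 1)"
  proof -
    have "Qf (eb (Suc b)) = Qf (fb b + 3)" using Q_e[of "Suc b"] sb_Suc by simp
    also have "\<dots> = Qf (fb b) + N (fb b) - N (fb b - 1)" by (rule Q_sp)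
    finally have a: "Qf (eb (Suc b)) = Qf (fb b) + N (fb b) - N (fb b - 1)" .
    have "N (fb b) - N (fb b - 1) = Dd (fb b - 1)"
      unfolding Dd_def using eb_ge[of b] unfolding fb_def by simp
    then show ?thesis using a qf by simp
  qed
  have d1: "Dd (eb b - 1) \<le> Dd (fb b - 1)" by (rule Dd_le) (simp add: fb_def)
  have d2: "Dd (fb b - 1) \<le> Dd (sb (Suc b) - 1)" by (rule Dd_le) (simp add: sb_Suc)
  have g: "2 ^ (k div 2) * Dd (sb (Suc b) - 1) \<le> Dd (eb (Suc b) - 1)" by (rule growth_e)
  have pos: "0 < Dd (fb b - 1)" by (rule Dd_pos)
  have k1: "kap \<le> 1" using kap_le by simp
  have kd: "kap * Dd (eb b - 1) \<le> kap * Dd (fb b - 1)"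
    using d1 kap_pos by (simp add: mult_left_mono)
  have "Qf (eb (Suc b)) \<le> kap * Dd (fb b - 1) + Dd (fb b - 1)"
    using q Suc.IH kd by linarith
  also have "\<dots> \<le> 2 * Dd (fb b - 1)" using k1 pos by (simp add: mult_right_mono)
  also have "\<dots> = kap * (2 ^ (k div 2) * Dd (fb b - 1))" unfolding kap_def by simp
  also have "\<dots> \<le> kap * Dd (eb (Suc b) - 1)"
  proof -
    have "2 ^ (k div 2) * Dd (fb b - 1) \<le> 2 ^ (k div 2) * Dd (sb (Suc b) - 1)"
      using d2 by (simp add: mult_left_mono)
    also have "\<dots> \<le> Dd (eb (Suc b) - 1)" using g .
    finally show ?thesis using kap_pos by (simp add: mult_left_mono)
  qed
  finally show ?case using q Suc.IH pos by simp
qed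

end

lemma s3_lo: "1.732 < sqrt (3::real)"
proof -
  have "sqrt ((1.732::real)^2) < sqrt 3" by (rule real_sqrt_less_mono) (simp add: power2_eq_square)
  then show ?thesis by simp
qed

lemma s3_hi: "sqrt (3::real) < 1.7321"
proof -
  have "sqrt 3 < sqrt ((1.7321::real)^2)" by (rule real_sqrt_less_mono) (simp add: power2_eq_square)
  then show ?thesis by simp
qed

lemma mu_pos: "0 < 2 - sqrt (3::real)" using s3_hi by simp
lemma mu_lt1: "2 - sqrt (3::real) < 1" using s3_lo by simp

lemma mu_one: "(2 - sqrt 3) * (1 + sqrt 3) = sqrt (3::real) - 1"
  by (simp add: algebra_simps)

context fam
begin

lemma Ef_entry: "Ef (eb b) = Dd (eb b - 2) - (sqrt 3 - 1) * Dd (eb b - 1)"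
proof -
  have a: "Suc (eb b - 1) = eb b" "Suc (eb b - 2) = eb b - 1" using eb_ge[of b] by simp_all
  show ?thesis unfolding Ef_def Dd_def a by (simp add: algebra_simps)
qed

lemma Ef_ub: "Ef (eb b) \<le> - (sqrt 3 - 5 / 3) * Dd (eb b - 1)"
proof -
  have "Dd (eb b - 2) \<le> 2 / 3 * Dd (eb b - 1)" using entry_ratio[of b] by simp
  then show ?thesis unfolding Ef_entry by (simp add: algebra_simps)
qed

lemma Ef_neg: "Ef (eb b) \<le> 0"
proof -
  have "0 \<le> (sqrt 3 - 5 / 3) * Dd (eb b - 1)" using s3_lo Dd_pos[of "eb b - 1"] by simp
  then show ?thesis using Ef_ub[of b] by linarith
qed

lemma Ef_lb: "- (sqrt 3 - 1) * Dd (eb b - 1) \<le> Ef (eb b)"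
  unfolding Ef_entry using Dd_pos[of "eb b - 2"] by (simp add: algebra_simps)

lemma D1_le_N: "Dd (eb b - 1) \<le> N (eb b)"
proof -
  have "Suc (eb b - 1) = eb b" using eb_ge[of b] by simp
  then show ?thesis unfolding Dd_def by simp
qed

lemma N_double: "2 \<le> i \<Longrightarrow> N (Suc i) \<le> 2 * N i"
  using N_rec[of i "\<delta> i"] by simp

lemma N_pow: "2 \<le> i \<Longrightarrow> N (i + j) \<le> 2 ^ j * N i"
proof (induction j)
  case 0 then show ?case by simp
next
  case (Suc j)
  have "N (i + Suc j) \<le> 2 * N (i + j)" using N_double[of "i + j"] Suc.prems by simp
  also have "\<dots> \<le> 2 * (2 ^ j * N i)" using Suc by simp
  finally show ?case by simp
qed

lemma N_e3: "N (eb b) \<le> 3 * Dd (eb b - 1)"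
proof -
  have a: "Suc (eb b - 1) = eb b" "Suc (eb b - 2) = eb b - 1" using eb_ge[of b] by simp_all
  have q: "0 \<le> Qf (eb b)" using Q_inv by blast
  have d: "Dd (eb b - 2) \<le> Dd (eb b - 1)" by (rule Dd_le) simp
  show ?thesis using q d unfolding Qf_def Dd_def a by simp
qed

definition eps3 :: real where "eps3 = (sqrt 3 - 1) * kap"
definition epsS :: real where "epsS = (sqrt 3 - 1) * (kap + sqrt 3 * (2 - sqrt 3) ^ (m + 1))"
definition cS :: real where
  "cS = sqrt 3 * (2 - sqrt 3) ^ (m + 1) * (sqrt 3 - 5 / 3) / (3 * 2 ^ (3 * m + 2))"

lemma eps3_le: "eps3 \<le> epsS"
  unfolding eps3_def epsS_def using s3_lo mu_pos by simp

lemma eps3_nonneg: "0 \<le> eps3" unfolding eps3_def using kap_pos s3_lo by simp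

lemma cS_pos: "0 < cS" unfolding cS_def using s3_lo mu_pos by simp

lemma B3: "t \<le> m \<Longrightarrow> N (eb b + 3 * t + 2) \<le> (sqrt 3 + eps3) * N (eb b + 3 * t + 1)"
proof -
  assume t: "t \<le> m"
  let ?D1 = "Dd (eb b - 1)" and ?Q = "Qf (eb b)" and ?E = "Ef (eb b)"
  have qe: "Qf (eb b + 3 * t) = ?Q" "Ef (eb b + 3 * t) = (2 - sqrt 3) ^ t * ?E"
    using QE_iter[OF t] by simp_all
  have r: "N (eb b + 3 * t + 2) - sqrt 3 * N (eb b + 3 * t + 1)
      = (sqrt 3 - 1) * ?Q + (2 - sqrt 3) * ((2 - sqrt 3) ^ t * ?E)"
    using R3[OF t, of b] unfolding qe by (simp add: algebra_simps s3sq s3sq')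
  have "(2 - sqrt 3) * ((2 - sqrt 3) ^ t * ?E) \<le> 0"
    using Ef_neg[of b] mu_pos by (simp add: mult_nonneg_nonpos)
  moreover have "(sqrt 3 - 1) * ?Q \<le> (sqrt 3 - 1) * (kap * ?D1)"
    using Q_inv[of b] s3_lo by (simp add: mult_left_mono)
  moreover have le: "eb b \<le> eb b + 3 * t + 1" by simp
  have "?D1 \<le> N (eb b + 3 * t + 1)" using D1_le_N[of b] N_mono[OF le] by linarith
  then have "(sqrt 3 - 1) * (kap * ?D1) \<le> eps3 * N (eb b + 3 * t + 1)"
    unfolding eps3_def using kap_pos s3_lo by (simp add: mult_left_mono)
  ultimately show ?thesis using r by (simp add: algebra_simps)
qed

lemma BS: "N (fb b + 3) \<le> (sqrt 3 + epsS) * N (fb b + 2)"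
proof -
  let ?D1 = "Dd (eb b - 1)" and ?Q = "Qf (eb b)" and ?E = "Ef (eb b)"
  have qe: "Qf (fb b) = ?Q" "Ef (fb b) = (2 - sqrt 3) ^ m * ?E"
    using QE_iter[of m b] unfolding fb_def by simp_all
  have r: "N (fb b + 3) - sqrt 3 * N (fb b + 2)
      = (sqrt 3 - 1) * ?Q + sqrt 3 * (2 - sqrt 3) ^ (m + 1) * (- ?E)"
    using RS[of b] unfolding qe by (simp add: algebra_simps s3sq s3sq')
  have a: "(sqrt 3 - 1) * ?Q \<le> (sqrt 3 - 1) * kap * ?D1"
    using Q_inv[of b] s3_lo by (simp add: mult_left_mono)
  have b: "sqrt 3 * (2 - sqrt 3) ^ (m + 1) * (- ?E) \<le> sqrt 3 * (2 - sqrt 3) ^ (m + 1) * ((sqrt 3 - 1) * ?D1)"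
    using Ef_lb[of b] mu_pos by (intro mult_left_mono) (simp_all add: algebra_simps)
  have le: "eb b \<le> fb b + 2" unfolding fb_def by simp
  have c: "?D1 \<le> N (fb b + 2)" using D1_le_N[of b] N_mono[OF le] by linarith
  have "N (fb b + 3) - sqrt 3 * N (fb b + 2) \<le> epsS * ?D1"
    using r a b unfolding epsS_def by (simp add: algebra_simps)
  also have "\<dots> \<le> epsS * N (fb b + 2)"
    using c unfolding epsS_def using kap_pos s3_lo mu_pos by (intro mult_left_mono) simp_all
  finally show ?thesis by (simp add: algebra_simps)
qed

lemma BSL: "(sqrt 3 + cS) * N (fb b + 2) \<le> N (fb b + 3)"
proof -
  let ?D1 = "Dd (eb b - 1)" and ?Q = "Qf (eb b)" and ?E = "Ef (eb b)"
  let ?c = "sqrt 3 * (2 - sqrt 3) ^ (m + 1)"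
  have qe: "Qf (fb b) = ?Q" "Ef (fb b) = (2 - sqrt 3) ^ m * ?E"
    using QE_iter[of m b] unfolding fb_def by simp_all
  have r: "N (fb b + 3) - sqrt 3 * N (fb b + 2)
      = (sqrt 3 - 1) * ?Q + ?c * (- ?E)"
    using RS[of b] unfolding qe by (simp add: algebra_simps s3sq s3sq')
  have a: "0 \<le> (sqrt 3 - 1) * ?Q" using Q_inv[of b] s3_lo by simp
  have cpos: "0 \<le> ?c" using mu_pos by simp
  have b: "?c * ((sqrt 3 - 5 / 3) * ?D1) \<le> ?c * (- ?E)"
    using Ef_ub[of b] cpos by (intro mult_left_mono) (simp_all add: algebra_simps)
  have n2: "N (fb b + 2) \<le> 2 ^ (3 * m + 2) * (3 * ?D1)"
  proof -
    have e2: "2 \<le> eb b" using eb_ge[of b] by simp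
    have "N (eb b + (3 * m + 2)) \<le> 2 ^ (3 * m + 2) * N (eb b)" by (rule N_pow[OF e2])
    also have "\<dots> \<le> 2 ^ (3 * m + 2) * (3 * ?D1)" using N_e3[of b] by simp
    finally show ?thesis unfolding fb_def by (simp add: add.assoc)
  qed
  have "cS * N (fb b + 2) \<le> cS * (2 ^ (3 * m + 2) * (3 * ?D1))"
    using n2 cS_pos by (simp add: mult_left_mono)
  also have "\<dots> = ?c * ((sqrt 3 - 5 / 3) * ?D1)" unfolding cS_def by (simp add: field_simps)
  finally have "cS * N (fb b + 2) \<le> N (fb b + 3) - sqrt 3 * N (fb b + 2)" using r a b by linarith
  then show ?thesis by (simp add: algebra_simps)
qed

end

context fam
begin

lemma epsS_small: "epsS \<le> 19 / 100"
proof -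
  have mu2: "(2 - sqrt 3) ^ (m + 1) \<le> (2 - sqrt 3) ^ 2"
    using m1 mu_pos mu_lt1 by (intro power_decreasing) simp_all
  have sq: "(2 - sqrt 3) ^ 2 = 7 - 4 * sqrt (3::real)"
    by (simp add: power2_eq_square algebra_simps s3sq)
  have "sqrt 3 * (2 - sqrt 3) ^ (m + 1) \<le> sqrt 3 * (2 - sqrt 3) ^ 2"
    using mu2 by (intro mult_left_mono) simp_all
  then have x: "sqrt 3 * (2 - sqrt 3) ^ (m + 1) \<le> sqrt 3 * (7 - 4 * sqrt 3)" unfolding sq .
  have a: "kap + sqrt 3 * (2 - sqrt 3) ^ (m + 1) \<le> 1 / 16 + sqrt 3 * (7 - 4 * sqrt 3)"
    using kap_le x by linarith
  have b: "sqrt 3 * (7 - 4 * sqrt 3) = 7 * sqrt 3 - 12" by (simp add: algebra_simps s3sq)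
  have c: "0 \<le> sqrt (3::real) - 1" using s3_lo by simp
  have "epsS \<le> (sqrt 3 - 1) * (1 / 16 + 7 * sqrt 3 - 12)"
    unfolding epsS_def using a b c by (simp add: mult_left_mono)
  also have "\<dots> = 527 / 16 - 303 / 16 * sqrt 3"
    by (simp add: field_simps s3sq s3sq')
  also have "\<dots> \<le> 19 / 100" using s3_lo by simp
  finally show ?thesis .
qed

lemma N_pos: "1 \<le> i \<Longrightarrow> 0 < N i"
proof -
  assume i: "1 \<le> i"
  have "nn (dl m k) 0 < nn (dl m k) i" using i by (subst nn_less_iff) simp
  then show ?thesis by simp
qed

lemma B1: "t \<le> m \<Longrightarrow> N (eb b + 3 * t + 1) \<le> 3 / 2 * N (eb b + 3 * t)"
proof -
  assume t: "t \<le> m"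
  have e: "Suc (eb b + 3 * t - 1) = eb b + 3 * t" "2 \<le> eb b + 3 * t - 1" using eb_ge[of b] by simp_all
  have "N (eb b + 3 * t) \<le> 2 * N (eb b + 3 * t - 1)" using N_double[OF e(2)] unfolding e(1) .
  then show ?thesis using rA1[OF t, of b] by simp
qed

lemma B2: "t < m \<Longrightarrow> N (eb b + 3 * t + 3) \<le> 5 / 3 * N (eb b + 3 * t + 2)"
proof -
  assume t: "t < m"
  have a: "N (eb b + 3 * t + 1) \<le> 3 / 2 * N (eb b + 3 * t)" using B1 t by simp
  have b: "N (eb b + 3 * t + 2) \<le> 2 * N (eb b + 3 * t + 1)" using rA3[of t b] t by simp
  have c: "N (eb b + 3 * t + 2) \<le> 3 * N (eb b + 3 * t)" using a b by simp
  show ?thesis using rA2[OF t, of b] c by simp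
qed

lemma BT2: "2 \<le> r \<Longrightarrow> r < k \<Longrightarrow> 1 \<le> b \<Longrightarrow> N (sb b + r + 1) \<le> 12 / 7 * N (sb b + r)"
proof -
  assume r: "2 \<le> r" "r < k" and b: "1 \<le> b"
  let ?i = "sb b + r"
  have "PP \<le> b * PP" using b by simp
  then have big: "5 \<le> sb b" using PP_gt k10 unfolding sb_def by linarith
  have r1: "r - 1 < k" using r by simp
  have e1: "sb b + (r - 1) = ?i - 1" "sb b + r - 1 + 1 = ?i" "sb b + r - 1 - 2 = ?i - 3"
    using r by simp_all
  have x: "N ?i = 2 * N (?i - 1) - N (?i - 3)" using rT[OF r1, of b] unfolding e1 .
  have e2: "Suc (?i - 2) = ?i - 1" "Suc (?i - 3) = ?i - 2" "2 \<le> ?i - 2" "2 \<le> ?i - 3"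
    using r big by simp_all
  have y: "N (?i - 1) \<le> 2 * N (?i - 2)" using N_double[OF e2(3)] unfolding e2(1) .
  have z: "N (?i - 2) \<le> 2 * N (?i - 3)" using N_double[OF e2(4)] unfolding e2(2) .
  have w: "N ?i \<le> 7 / 2 * N (?i - 2)" using x y z by simp
  have v: "N (?i + 1) = 2 * N ?i - N (?i - 2)" using rT[OF r(2), of b] by simp
  show ?thesis using v w by simp
qed

lemma s3_prod: "(sqrt 3 + epsS) * (sqrt 3 + eps3) \<le> 2 + sqrt 3"
proof -
  have e: "eps3 \<le> 19 / 100" "epsS \<le> 19 / 100" using eps3_le epsS_small by simp_all
  have p: "0 \<le> sqrt 3 + eps3" "0 \<le> sqrt 3 + epsS" using eps3_nonneg eps3_le s3_lo by simp_all
  have "(sqrt 3 + epsS) * (sqrt 3 + eps3) \<le> (sqrt 3 + 19 / 100) * (sqrt 3 + 19 / 100)"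
    using e p by (intro mult_mono) simp_all
  also have "\<dots> = 3 + 38 / 100 * sqrt 3 + 361 / 10000" by (simp add: algebra_simps s3sq)
  also have "\<dots> \<le> 2 + sqrt 3" using s3_lo by simp
  finally show ?thesis .
qed

lemma tail_from_bound:
  assumes "N (Suc i) = 2 * N i - N (i - 2)" "N i \<le> (2 + sqrt 3) * N (i - 2)"
  shows "N (Suc i) \<le> sqrt 3 * N i"
proof -
  have "(2 - sqrt 3) * N i \<le> (2 - sqrt 3) * ((2 + sqrt 3) * N (i - 2))"
    using assms(2) mu_pos by (simp add: mult_left_mono)
  also have "\<dots> = N (i - 2)" by (simp add: algebra_simps s3sq s3sq')
  finally show ?thesis using assms(1) by (simp add: algebra_simps)
qed

lemma BT0: "N (sb (Suc b) + 1) \<le> sqrt 3 * N (sb (Suc b))"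
proof -
  let ?i = "sb (Suc b)"
  have i: "?i = fb b + 3" by (rule sb_Suc)
  have k0: "0 < k" using k10 by simp
  have v: "N (Suc ?i) = 2 * N ?i - N (?i - 2)" using rT[OF k0, of "Suc b"] by simp
  have a: "N (fb b + 3) \<le> (sqrt 3 + epsS) * N (fb b + 2)" by (rule BS)
  have b: "N (fb b + 2) \<le> (sqrt 3 + eps3) * N (fb b + 1)"
    using B3[of m b] unfolding fb_def by (simp add: add.assoc)
  have p: "0 \<le> sqrt 3 + epsS" using eps3_nonneg eps3_le s3_lo by simp
  have "N ?i \<le> (sqrt 3 + epsS) * ((sqrt 3 + eps3) * N (fb b + 1))"
    using a b p i by (smt (verit) mult_left_mono)
  also have "\<dots> \<le> (2 + sqrt 3) * N (fb b + 1)"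
    using s3_prod by (simp add: mult.assoc[symmetric] mult_right_mono)
  finally have "N ?i \<le> (2 + sqrt 3) * N (?i - 2)" using i by simp
  then show ?thesis using tail_from_bound[OF v] by simp
qed

lemma BT1: "N (sb (Suc b) + 2) \<le> sqrt 3 * N (sb (Suc b) + 1)"
proof -
  let ?i = "sb (Suc b) + 1"
  have i: "sb (Suc b) = fb b + 3" by (rule sb_Suc)
  have k1: "1 < k" using k10 by simp
  have k0: "0 < k" using k10 by simp
  have v: "N (Suc ?i) = 2 * N ?i - N (?i - 2)" using rT[OF k1, of "Suc b"] by simp
  have x: "N ?i = 2 * N (fb b + 3) - N (fb b + 1)" using rT[OF k0, of "Suc b"] i by simp
  have a: "N (fb b + 3) \<le> (sqrt 3 + epsS) * N (fb b + 2)" by (rule BS)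
  have e2: "2 \<le> fb b + 1" using eb_ge[of b] unfolding fb_def by simp
  have z: "N (fb b + 2) \<le> 2 * N (fb b + 1)" using N_double[OF e2] by simp
  have "N ?i \<le> (2 * sqrt 3 + 2 * epsS - 1 / 2) * N (fb b + 2)" using x a z by (simp add: algebra_simps)
  also have "\<dots> \<le> (2 + sqrt 3) * N (fb b + 2)"
    using epsS_small s3_lo s3_hi by (intro mult_right_mono) simp_all
  finally have "N ?i \<le> (2 + sqrt 3) * N (?i - 2)" using i by simp
  then show ?thesis using tail_from_bound[OF v] by simp
qed

lemma upper_all:
  assumes i: "sb 1 \<le> i"
  shows "N (Suc i) \<le> (sqrt 3 + epsS) * N i"
proof -
  have i2: "2 \<le> i" using i unfolding sb_def by simp
  have Npos: "0 \<le> N i" by simp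
  have s3e: "sqrt 3 \<le> sqrt 3 + epsS" using eps3_nonneg eps3_le by simp
  have s3e': "sqrt 3 + eps3 \<le> sqrt 3 + epsS" using eps3_le by simp
  have le1: "c * N i \<le> (sqrt 3 + epsS) * N i" if "c \<le> sqrt 3 + epsS" for c
    using that Npos by (simp add: mult_right_mono)
  obtain b where cat: "(\<exists>r<k. i = sb b + r) \<or> (\<exists>t\<le>m. i = eb b + 3 * t) \<or> (\<exists>t\<le>m. i = eb b + 3 * t + 1)
     \<or> (\<exists>t<m. i = eb b + 3 * t + 2) \<or> i = fb b + 2" using categories[OF i2] by blast
  from cat show ?thesis
  proof (elim disjE exE conjE)
    fix r assume r: "r < k" and ir: "i = sb b + r"
    have b1: "1 \<le> b"
    proof (rule ccontr)
      assume "\<not> 1 \<le> b"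
      then have "b = 0" by simp
      then have "i < sb 1" using ir r unfolding sb_def PP_def by simp
      then show False using i by simp
    qed
    then obtain b' where b': "b = Suc b'" by (cases b) auto
    consider "r = 0" | "r = 1" | "2 \<le> r" by linarith
    then show ?thesis
    proof cases
      case 1
      then have "N (Suc i) \<le> sqrt 3 * N i" using BT0[of b'] ir b' by simp
      then show ?thesis using le1[OF s3e] by linarith
    next
      case 2
      then have "N (Suc i) \<le> sqrt 3 * N i" using BT1[of b'] ir b' by (simp add: numeral_2_eq_2)
      then show ?thesis using le1[OF s3e] by linarith
    next
      case 3
      then have "N (Suc i) \<le> 12 / 7 * N i" using BT2[OF 3 r b1] ir by simp
      moreover have "12 / 7 \<le> sqrt 3 + epsS" using s3e s3_lo by simp
      ultimately show ?thesis using le1 by fastforce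
    qed
  next
    fix t assume t: "t \<le> m" and it: "i = eb b + 3 * t"
    have e: "Suc (eb b + 3 * t) = eb b + 3 * t + 1" by simp
    have "N (Suc i) \<le> 3 / 2 * N i" using B1[OF t, of b] unfolding it e .
    moreover have "3 / 2 \<le> sqrt 3 + epsS" using s3e s3_lo by simp
    ultimately show ?thesis using le1 by fastforce
  next
    fix t assume t: "t \<le> m" and it: "i = eb b + 3 * t + 1"
    have e: "Suc (eb b + 3 * t + 1) = eb b + 3 * t + 2" by simp
    have "N (Suc i) \<le> (sqrt 3 + eps3) * N i" using B3[OF t, of b] unfolding it e .
    then show ?thesis using le1[OF s3e'] by linarith
  next
    fix t assume t: "t < m" and it: "i = eb b + 3 * t + 2"
    have e: "Suc (eb b + 3 * t + 2) = eb b + 3 * t + 3" by simp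
    have "N (Suc i) \<le> 5 / 3 * N i" using B2[OF t, of b] unfolding it e .
    moreover have "5 / 3 \<le> sqrt 3 + epsS" using s3e s3_lo by simp
    ultimately show ?thesis using le1 by fastforce
  next
    assume it: "i = fb b + 2"
    have e: "Suc (fb b + 2) = fb b + 3" by simp
    show ?thesis using BS[of b] unfolding it e .
  qed
qed

lemma fb_smono: "strict_mono (\<lambda>b. fb b + 2)"
  unfolding strict_mono_def fb_def eb_def sb_def PP_def by simp

theorem delta_bounds:
  "ereal (sqrt 3 + cS) \<le> delta (wd \<delta>) \<and> delta (wd \<delta>) \<le> ereal (sqrt 3 + epsS)"
proof -
  let ?r = "\<lambda>i. ereal (real (n (Suc i)) / real (n i))"
  have d: "delta (wd \<delta>) = limsup ?r" using delta_wd valid_all by blast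
  have up: "limsup ?r \<le> ereal (sqrt 3 + epsS)"
  proof (rule Limsup_bounded)
    show "\<forall>\<^sub>F i in sequentially. ?r i \<le> ereal (sqrt 3 + epsS)"
      unfolding eventually_sequentially
    proof (intro exI allI impI)
      fix i assume i: "sb 1 \<le> i"
      have pos: "0 < N i" using N_pos i unfolding sb_def by simp
      have "N (Suc i) / N i \<le> sqrt 3 + epsS" using upper_all[OF i] pos by (simp add: divide_le_eq)
      then show "?r i \<le> ereal (sqrt 3 + epsS)" by simp
    qed
  qed
  have lo: "ereal (sqrt 3 + cS) \<le> limsup (?r \<circ> (\<lambda>b. fb b + 2))"
  proof (rule le_Limsup)
    show "sequentially \<noteq> bot" by simp
    show "\<forall>\<^sub>F b in sequentially. ereal (sqrt 3 + cS) \<le> (?r \<circ> (\<lambda>b. fb b + 2)) b"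
    proof (rule always_eventually, rule allI)
      fix b
      have pos: "0 < N (fb b + 2)" using N_pos by simp
      have "sqrt 3 + cS \<le> N (Suc (fb b + 2)) / N (fb b + 2)"
        using BSL[of b] pos by (simp add: le_divide_eq numeral_3_eq_3)
      then show "ereal (sqrt 3 + cS) \<le> (?r \<circ> (\<lambda>b. fb b + 2)) b" by simp
    qed
  qed
  have "limsup (?r \<circ> (\<lambda>b. fb b + 2)) \<le> limsup ?r" by (rule limsup_subseq_mono[OF fb_smono])
  then show ?thesis using up lo d by simp
qed

theorem in_D0: "delta (wd \<delta>) \<in> D0"
  unfolding D0_def using abundant_wd[OF valid_all] by blast

end

lemma fam_inst: "1 \<le> m \<Longrightarrow> fam m (2 * m + 10)"
  by unfold_locales simp_all

lemma epsS_bound: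
  assumes m: "1 \<le> m"
  shows "fam.epsS m (2 * m + 10) \<le> (1 / 2) ^ m"
proof -
  interpret F: fam m "2 * m + 10" using fam_inst[OF m] .
  have k: "(2 * m + 10) div 2 = m + 5" by simp
  have kap: "F.kap = (1 / 2) ^ m / 16"
    unfolding F.kap_def k by (simp add: power_add field_simps)
  have mu: "(2 - sqrt 3) ^ (m + 1) \<le> (1 / 2) ^ (m + 1)"
    using mu_pos s3_lo by (intro power_mono) simp_all
  have h: "(0::real) \<le> (1 / 2) ^ m" by simp
  have "sqrt 3 * (2 - sqrt 3) ^ (m + 1) \<le> sqrt 3 * (1 / 2) ^ (m + 1)"
    using mu by (intro mult_left_mono) simp_all
  also have "\<dots> = sqrt 3 / 2 * (1 / 2) ^ m" by simp
  also have "\<dots> \<le> 7 / 8 * (1 / 2) ^ m" using s3_hi h by (intro mult_right_mono) simp_all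
  finally have a: "sqrt 3 * (2 - sqrt 3) ^ (m + 1) \<le> 7 / 8 * (1 / 2) ^ m" .
  have b: "F.kap + sqrt 3 * (2 - sqrt 3) ^ (m + 1) \<le> (1 / 2) ^ m"
    using a h unfolding kap by linarith
  have c: "0 \<le> sqrt 3 - 1" "sqrt 3 - 1 \<le> (1::real)" using s3_lo s3_hi by simp_all
  have "F.epsS \<le> 1 * (1 / 2) ^ m"
    unfolding F.epsS_def using b c F.kap_pos mu_pos
    by (intro mult_mono) simp_all
  then show ?thesis by simp
qed

lemma exists_near:
  assumes e: "0 < e"
  shows "\<exists>x. sqrt 3 < x \<and> x < sqrt 3 + e \<and> ereal x \<in> D0"
proof -
  obtain j where j: "(1 / 2 :: real) ^ j < e" using real_arch_pow_inv[OF e, of "1/2"] by auto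
  let ?m = "Suc j"
  have m: "1 \<le> ?m" by simp
  interpret F: fam ?m "2 * ?m + 10" using fam_inst[OF m] .
  have "(1 / 2 :: real) ^ ?m \<le> (1 / 2) ^ j" by (intro power_decreasing) simp_all
  then have "F.epsS \<le> (1 / 2) ^ j" using epsS_bound[OF m] by linarith
  then have eps: "F.epsS < e" using j by linarith
  have bd: "ereal (sqrt 3 + F.cS) \<le> delta (wd (dl ?m (2 * ?m + 10)))"
    "delta (wd (dl ?m (2 * ?m + 10))) \<le> ereal (sqrt 3 + F.epsS)"
    using F.delta_bounds by auto
  then obtain x where x: "delta (wd (dl ?m (2 * ?m + 10))) = ereal x"
    by (cases "delta (wd (dl ?m (2 * ?m + 10)))") auto
  have "sqrt 3 + F.cS \<le> x" "x \<le> sqrt 3 + F.epsS" using bd x by auto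
  then have "sqrt 3 < x" "x < sqrt 3 + e" using F.cS_pos eps by auto
  moreover have "ereal x \<in> D0" using F.in_D0 x by simp
  ultimately show ?thesis by blast
qed

definition gsel :: "real \<Rightarrow> real" where
  "gsel e = (SOME x. sqrt 3 < x \<and> x < sqrt 3 + e \<and> ereal x \<in> D0)"

lemma gsel: "0 < e \<Longrightarrow> sqrt 3 < gsel e \<and> gsel e < sqrt 3 + e \<and> ereal (gsel e) \<in> D0"
  unfolding gsel_def using someI_ex[OF exists_near] by blast

fun fseq :: "nat \<Rightarrow> real" where
  "fseq 0 = gsel 1"
| "fseq (Suc j) = gsel (min (fseq j - sqrt 3) (1 / (real j + 2)))"

lemma fseq_prop: "sqrt 3 < fseq j \<and> fseq j < sqrt 3 + 1 / (real j + 1) \<and> ereal (fseq j) \<in> D0"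
proof (induction j)
  case 0 then show ?case using gsel[of 1] by simp
next
  case (Suc j)
  have pos: "0 < min (fseq j - sqrt 3) (1 / (real j + 2))" using Suc by simp
  have g: "sqrt 3 < fseq (Suc j) \<and> fseq (Suc j) < sqrt 3 + min (fseq j - sqrt 3) (1 / (real j + 2))
    \<and> ereal (fseq (Suc j)) \<in> D0" using gsel[OF pos] by simp
  have e2: "real (Suc j) + 1 = real j + 2" by simp
  have mn: "min (fseq j - sqrt 3) (1 / (real j + 2)) \<le> 1 / (real (Suc j) + 1)"
    unfolding e2 by (rule min.cobounded2)
  show ?case using g mn by linarith
qed

lemma fseq_dec: "fseq (Suc j) < fseq j"
proof -
  have pos: "0 < min (fseq j - sqrt 3) (1 / (real j + 2))" using fseq_prop[of j] by simp
  have "fseq (Suc j) < sqrt 3 + min (fseq j - sqrt 3) (1 / (real j + 2))" using gsel[OF pos] by simp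
  then show ?thesis by simp
qed

lemma fseq_lim: "fseq \<longlonglongrightarrow> sqrt 3"
proof (rule tendsto_sandwich[of "\<lambda>_. sqrt 3" _ _ "\<lambda>j. sqrt 3 + 1 / (real j + 1)"])
  show "\<forall>\<^sub>F j in sequentially. sqrt 3 \<le> fseq j" using fseq_prop by (simp add: less_imp_le)
  show "\<forall>\<^sub>F j in sequentially. fseq j \<le> sqrt 3 + 1 / (real j + 1)" using fseq_prop by (simp add: less_imp_le)
  show "(\<lambda>_. sqrt 3) \<longlonglongrightarrow> sqrt 3" by simp
  have "(\<lambda>j. 1 / (real j + 1)) \<longlonglongrightarrow> 0"
    using LIMSEQ_inverse_real_of_nat by (simp add: inverse_eq_divide add.commute)
  then show "(\<lambda>j. sqrt 3 + 1 / (real j + 1)) \<longlonglongrightarrow> sqrt 3"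
    using tendsto_add[of "\<lambda>_. sqrt 3" "sqrt 3" sequentially "\<lambda>j. 1 / (real j + 1)" 0] by simp
qed

theorem proposition7p5:
  shows "\<exists>f :: nat \<Rightarrow> real. (\<forall>k. f (Suc k) < f k) \<and> (\<forall>k. ereal (f k) \<in> D0)
           \<and> f \<longlonglongrightarrow> sqrt 3"
  using fseq_dec fseq_prop fseq_lim by blast

end
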